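(* Let $R$ be a principal Artinian ring and let $f, g \in R[x]$ be nilpotent polynomials, not both zero. Let $d$ be a generator of the ideal $(c(f), c(g))$ and let $\tilde f, \tilde g \in R[x]$ satisfy $f = d\tilde f$ and $g = d\tilde g$. Then $$\mathrm{Rres}_R(f,g) = \{\, d s : s\in R,\ (s \bmod \mathrm{Ann}(d)) \in \mathrm{Rres}_{R/\mathrm{Ann}(d)}(\bar{\tilde f}, \bar{\tilde g})\,\}$$ (i.e. $\mathrm{rres}(f,g) = d\cdot\mathrm{rres}_{R/\mathrm{Ann}(d)}(\tilde f,\tilde g)$), and at least one of $\tilde f$, $\tilde g$ is not nilpotent.
   Context: A principal Artinian ring is a commutative ring with identity in which every ideal is principal and which satisfies the descending chain condition on ideals. For $f=\sum a_ix^i$, the content ideal is $C(f)=(a_0,\dots,a_d)$ and $c(f)$ is any generator of it. $\mathrm{Ann}(d)=\{s\in R: sd=0\}$; bars denote images in $(R/\mathrm{Ann}(d))[x]$. For a commutative ring $S$ and $f,g\in S[x]$, $\mathrm{Rres}_S(f,g)=(f,g)\cap S$ with $(f,g)$ the ideal of $S[x]$ generated by $f,g$. *)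

theory Defs
  imports "HOL-Computational_Algebra.Polynomial"
begin

definition is_ideal :: "'a::comm_ring_1 set \<Rightarrow> bool" where
  "is_ideal I \<longleftrightarrow> 0 \<in> I \<and> (\<forall>x\<in>I. \<forall>y\<in>I. x + y \<in> I) \<and> (\<forall>r. \<forall>x\<in>I. r * x \<in> I)"

definition ideal_span :: "'a::comm_ring_1 set \<Rightarrow> 'a set" where
  "ideal_span S = \<Inter>{I. is_ideal I \<and> S \<subseteq> I}"

definition principal_ideal :: "'a::comm_ring_1 \<Rightarrow> 'a set" where
  "principal_ideal a = {r * a | r. True}"

definition principal_ring :: "'a::comm_ring_1 itself \<Rightarrow> bool" where
  "principal_ring _ \<longleftrightarrow> (\<forall>I::'a set. is_ideal I \<longrightarrow> (\<exists>a. I = principal_ideal a))"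

definition artinian_ring :: "'a::comm_ring_1 itself \<Rightarrow> bool" where
  "artinian_ring _ \<longleftrightarrow> \<not> (\<exists>F :: nat \<Rightarrow> 'a set. (\<forall>n. is_ideal (F n)) \<and> (\<forall>n. F (Suc n) \<subset> F n))"

definition content_ideal :: "'a::comm_ring_1 poly \<Rightarrow> 'a set" where
  "content_ideal f = ideal_span (range (coeff f))"

definition nilpotent_poly :: "'a::comm_ring_1 poly \<Rightarrow> bool" where
  "nilpotent_poly p \<longleftrightarrow> (\<exists>n. p ^ n = 0)"

definition ann :: "'a::comm_ring_1 \<Rightarrow> 'a set" where
  "ann d = {s. s * d = 0}"

(* Rres_R(f,g) = (f,g) \<inter> R, constants identified with R *)
definition rres :: "'a::comm_ring_1 poly \<Rightarrow> 'a poly \<Rightarrow> 'a set" where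
  "rres f g = {c. \<exists>u v. u * f + v * g = [:c:]}"

(* Preimage in R of Rres_{R/I}(fbar, gbar): the set of s \<in> R whose class mod I lies in
   the ideal (fbar, gbar) of (R/I)[x].  Every polynomial over R/I lifts to R[x], and
   equality in (R/I)[x] means all coefficients of the difference lie in I. *)
definition rres_mod :: "'a::comm_ring_1 set \<Rightarrow> 'a poly \<Rightarrow> 'a poly \<Rightarrow> 'a set" where
  "rres_mod I f g = {s. \<exists>u v. \<forall>i. coeff (u * f + v * g - [:s:]) i \<in> I}"

end

theory Submission
  imports Defs
begin

definition nil :: "'a::comm_ring_1 \<Rightarrow> bool" where
  "nil a \<longleftrightarrow> (\<exists>k. a ^ k = 0)"

lemma nil_add:
  fixes a b :: "'a::comm_ring_1"
  assumes "nil a" "nil b" shows "nil (a + b)"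
proof -
  obtain m n where m: "a ^ m = 0" and n: "b ^ n = 0" using assms unfolding nil_def by blast
  have "(a + b) ^ (m + n) = (\<Sum>k\<le>m+n. of_nat ((m+n) choose k) * a ^ k * b ^ (m + n - k))"
    by (rule binomial_ring)
  also have "\<dots> = 0"
  proof (rule sum.neutral, intro ballI)
    fix k assume "k \<in> {..m+n}"
    show "of_nat ((m+n) choose k) * a ^ k * b ^ (m + n - k) = 0"
    proof (cases "m \<le> k")
      case True
      then have "a ^ k = a ^ m * a ^ (k - m)" by (simp add: power_add[symmetric])
      then show ?thesis using m by simp
    next
      case False
      then have "b ^ (m + n - k) = b ^ n * b ^ (m + n - k - n)" by (simp add: power_add[symmetric] add.commute)
      then show ?thesis using n by simp
    qed
  qed
  finally show ?thesis unfolding nil_def by blast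
qed

lemma nil_mult:
  fixes a r :: "'a::comm_ring_1"
  assumes "nil a" shows "nil (r * a)"
  using assms unfolding nil_def by (metis mult_zero_right power_mult_distrib)

lemma nil_uminus:
  fixes a :: "'a::comm_ring_1"
  assumes "nil a" shows "nil (- a)"
  using nil_mult[OF assms, of "-1"] by simp

lemma pCons_split: "pCons a (q::'a::comm_ring_1 poly) = [:a:] + monom 1 1 * q"
  by (auto simp: poly_eq_iff coeff_monom_mult coeff_pCons split: nat.split)

lemma nilpotent_poly_nil: "nilpotent_poly p \<longleftrightarrow> nil p"
  unfolding nilpotent_poly_def nil_def ..

lemma nil_coeff0:
  fixes p :: "'a::comm_ring_1 poly"
  assumes "nil p" shows "nil (coeff p 0)"
proof -
  obtain n where "p ^ n = 0" using assms unfolding nil_def by blast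
  then have "coeff p 0 ^ n = 0" by (metis coeff_0 coeff_0_power)
  then show ?thesis unfolding nil_def by blast
qed

lemma nil_coeff:
  fixes p :: "'a::comm_ring_1 poly"
  assumes "nil p" shows "nil (coeff p i)"
  using assms
proof (induction i arbitrary: p)
  case 0
  then show ?case by (rule nil_coeff0)
next
  case (Suc i)
  obtain a q where pq: "p = pCons a q" by (cases p)
  have "nil a" using nil_coeff0[OF Suc.prems] pq by simp
  then obtain k where "a ^ k = 0" unfolding nil_def by blast
  then have "[:a:] ^ k = 0" by (simp add: poly_const_pow)
  then have "nil [:a:]" unfolding nil_def by blast
  then have "nil (p + - [:a:])" using Suc.prems nil_add nil_uminus by blast
  moreover have "p + - [:a:] = monom 1 1 * q" using pq pCons_split[of a q] by simp
  ultimately obtain m where "(monom 1 1 * q) ^ m = 0" unfolding nil_def by auto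
  then have z: "monom 1 m * q ^ m = 0" by (simp add: power_mult_distrib monom_power)
  have "q ^ m = 0"
  proof (rule poly_eqI)
    fix j
    have "coeff (monom 1 m * q ^ m) (j + m) = coeff (q ^ m) j"
      by (simp add: coeff_monom_mult)
    then show "coeff (q ^ m) j = coeff 0 j" using z by simp
  qed
  then have "nil q" unfolding nil_def by blast
  then have "nil (coeff q i)" by (rule Suc.IH)
  then show ?case using pq by simp
qed

lemma ideal_span_least: "is_ideal I \<Longrightarrow> S \<subseteq> I \<Longrightarrow> ideal_span S \<subseteq> I"
  unfolding ideal_span_def by blast

theorem lemma5p4:
  fixes f g ft gt :: "'a::comm_ring_1 poly" and d :: 'a
  assumes "principal_ring TYPE('a)"
    and "artinian_ring TYPE('a)"
    and "nilpotent_poly f" and "nilpotent_poly g"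
    and "f \<noteq> 0 \<or> g \<noteq> 0"
    and "ideal_span (content_ideal f \<union> content_ideal g) = principal_ideal d"
    and "f = smult d ft" and "g = smult d gt"
  shows "rres f g = {d * s | s. s \<in> rres_mod (ann d) ft gt}
         \<and> (\<not> nilpotent_poly ft \<or> \<not> nilpotent_poly gt)"
proof
  show "rres f g = {d * s | s. s \<in> rres_mod (ann d) ft gt}"
  proof
    show "rres f g \<subseteq> {d * s | s. s \<in> rres_mod (ann d) ft gt}"
    proof
      fix c assume "c \<in> rres f g"
      then obtain u v where uv: "u * f + v * g = [:c:]" unfolding rres_def by blast
      define h where "h = u * ft + v * gt"
      have "smult d h = u * f + v * g" unfolding h_def assms(7,8)
        by (simp add: smult_add_right)
      then have hd: "smult d h = [:c:]" using uv by simp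
      have c: "c = d * coeff h 0" using arg_cong[OF hd, of "\<lambda>p. coeff p 0"] by simp
      have "\<forall>i. coeff (u * ft + v * gt - [:coeff h 0:]) i \<in> ann d"
      proof
        fix i
        show "coeff (u * ft + v * gt - [:coeff h 0:]) i \<in> ann d"
        proof (cases i)
          case 0 then show ?thesis by (simp add: h_def ann_def)
        next
          case (Suc j)
          have "d * coeff h i = 0" using arg_cong[OF hd, of "\<lambda>p. coeff p i"] Suc by simp
          then show ?thesis using Suc by (simp add: h_def ann_def mult.commute)
        qed
      qed
      then have "coeff h 0 \<in> rres_mod (ann d) ft gt" unfolding rres_mod_def by blast
      then show "c \<in> {d * s | s. s \<in> rres_mod (ann d) ft gt}" using c by blast
    qed
  next
    show "{d * s | s. s \<in> rres_mod (ann d) ft gt} \<subseteq> rres f g"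
    proof
      fix c assume "c \<in> {d * s | s. s \<in> rres_mod (ann d) ft gt}"
      then obtain s u v where c: "c = d * s"
        and h: "\<forall>i. coeff (u * ft + v * gt - [:s:]) i \<in> ann d"
        unfolding rres_mod_def by blast
      have "smult d (u * ft + v * gt - [:s:]) = 0"
        using h by (intro poly_eqI) (simp add: ann_def mult.commute)
      moreover have "smult d (u * ft + v * gt - [:s:]) = u * f + v * g - [:c:]"
        unfolding assms(7,8) c by (simp add: smult_add_right smult_diff_right)
      ultimately have "u * f + v * g = [:c:]" by simp
      then show "c \<in> rres f g" unfolding rres_def by blast
    qed
  qed
next
  show "\<not> nilpotent_poly ft \<or> \<not> nilpotent_poly gt"
  proof (rule ccontr)
    assume "\<not> ?thesis"
    then have nft: "nil ft" and ngt: "nil gt" by (auto simp: nilpotent_poly_nil)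
    define T where "T = {d * x | x. nil x}"
    have nil0: "nil (0::'a)" unfolding nil_def by (metis power_one_right)
    have "is_ideal T" unfolding is_ideal_def T_def
    proof (intro conjI ballI allI)
      show "0 \<in> {d * x |x. nil x}" using nil0 by force
    next
      fix x y assume "x \<in> {d * x |x. nil x}" "y \<in> {d * x |x. nil x}"
      then obtain a b where "x = d * a" "y = d * b" "nil a" "nil b" by blast
      then show "x + y \<in> {d * x |x. nil x}" using nil_add
        by (metis (mono_tags, lifting) distrib_left mem_Collect_eq)
    next
      fix r x assume "x \<in> {d * x |x. nil x}"
      then obtain a where "x = d * a" "nil a" by blast
      then show "r * x \<in> {d * x |x. nil x}" using nil_mult[of a r]
        by (metis (mono_tags, lifting) mem_Collect_eq mult.left_commute)
    qed
    have cf: "content_ideal f \<subseteq> T" unfolding content_ideal_def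
      using \<open>is_ideal T\<close> apply (rule ideal_span_least)
      using assms(7) nil_coeff[OF nft] unfolding T_def by auto
    have cg: "content_ideal g \<subseteq> T" unfolding content_ideal_def
      using \<open>is_ideal T\<close> apply (rule ideal_span_least)
      using assms(8) nil_coeff[OF ngt] unfolding T_def by auto
    have "d \<in> principal_ideal d" unfolding principal_ideal_def
      by (metis (mono_tags, lifting) mem_Collect_eq mult_1)
    then have "d \<in> T" using ideal_span_least[OF \<open>is_ideal T\<close>, of "content_ideal f \<union> content_ideal g"]
      cf cg assms(6) by blast
    then obtain x where dx: "d = d * x" and "nil x" unfolding T_def by blast
    then obtain k where xk: "x ^ k = 0" unfolding nil_def by blast
    have "d * x ^ n = d" for n
      by (induction n) (simp, metis dx mult.assoc mult.commute power_Suc)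
    then have "d = 0" using xk by (metis mult_zero_right)
    then show False using assms(5,7,8) by simp
  qed
qed

end
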